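(* Let $X$ be a non-empty set, $A$ a non-empty subset of $X$, and $f,g\in\mathcal T_X(A)$. Then in the semigroup $\mathcal T_X(A)$: (i) $f\,\mathscr L\,g$ iff $f=g$, or $\operatorname{im}(f)=\operatorname{im}(g)$ and $A$ saturates both $\ker(f)$ and $\ker(g)$; (ii) $f\,\mathscr R\,g$ iff $\ker(f)=\ker(g)$; (iii) $f\,\mathscr H\,g$ iff $f=g$, or $\operatorname{im}(f)=\operatorname{im}(g)$ and $A$ saturates $\ker(f)=\ker(g)$; (iv) $f\,\mathscr D\,g$ iff $\ker(f)=\ker(g)$, or $\operatorname{rank}(f)=\operatorname{rank}(g)$ and $A$ saturates both $\ker(f)$ and $\ker(g)$; (v) $f\,\mathscr J\,g$ iff $\ker(f)=\ker(g)$ or $|Af|=\operatorname{rank}(f)=\operatorname{rank}(g)=|Ag|$. Further, $\mathscr D=\mathscr J$ in $\mathcal T_X(A)$ if and only if $A$ is finite or $A=X$.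
   Context: $\mathcal T_X$ is the semigroup of all maps $X\to X$ (maps written on the right, composed left to right). $\mathcal T_X(A)=\{f\in\mathcal T_X:\operatorname{im}(f)\subseteq A\}$. $\ker(f)=\{(x,y):xf=yf\}$, $\operatorname{rank}(f)=|\operatorname{im}(f)|$, $Af=\{xf:x\in A\}$. A set $B$ saturates an equivalence $\sigma$ if every $\sigma$-class contains an element of $B$. Green's relations are computed within the semigroup $\mathcal T_X(A)$ ($x\,\mathscr L\,y$ iff $T^1x=T^1y$, etc., with $T=\mathcal T_X(A)$). *)

theory Defs
  imports Main "HOL-Library.Equipollence"
begin

text \<open>The ground set X is the universe of the type 'a (types are non-empty).
  Maps are written on the right and composed left to right:
  x (f g) = (x f) g.\<close>

definition TXA :: "'a set \<Rightarrow> ('a \<Rightarrow> 'a) set" where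
  "TXA A = {f. range f \<subseteq> A}"

definition tmult :: "('a \<Rightarrow> 'a) \<Rightarrow> ('a \<Rightarrow> 'a) \<Rightarrow> ('a \<Rightarrow> 'a)" where
  "tmult f g = (\<lambda>x. g (f x))"

definition kernel :: "('a \<Rightarrow> 'b) \<Rightarrow> ('a \<times> 'a) set" where
  "kernel f = {(x, y). f x = f y}"

definition saturates :: "'a set \<Rightarrow> ('a \<times> 'a) set \<Rightarrow> bool" where
  "saturates B \<sigma> \<longleftrightarrow> (\<forall>C \<in> UNIV // \<sigma>. C \<inter> B \<noteq> {})"

text \<open>Principal ideals in T^1 where T = TXA A.\<close>
definition idealL :: "'a set \<Rightarrow> ('a \<Rightarrow> 'a) \<Rightarrow> ('a \<Rightarrow> 'a) set" where
  "idealL A f = insert f {tmult h f | h. h \<in> TXA A}"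

definition idealR :: "'a set \<Rightarrow> ('a \<Rightarrow> 'a) \<Rightarrow> ('a \<Rightarrow> 'a) set" where
  "idealR A f = insert f {tmult f h | h. h \<in> TXA A}"

definition idealJ :: "'a set \<Rightarrow> ('a \<Rightarrow> 'a) \<Rightarrow> ('a \<Rightarrow> 'a) set" where
  "idealJ A f = idealL A f \<union> idealR A f
      \<union> {tmult (tmult h f) k | h k. h \<in> TXA A \<and> k \<in> TXA A}"

definition greenL :: "'a set \<Rightarrow> ('a \<Rightarrow> 'a) \<Rightarrow> ('a \<Rightarrow> 'a) \<Rightarrow> bool" where
  "greenL A f g \<longleftrightarrow> idealL A f = idealL A g"

definition greenR :: "'a set \<Rightarrow> ('a \<Rightarrow> 'a) \<Rightarrow> ('a \<Rightarrow> 'a) \<Rightarrow> bool" where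
  "greenR A f g \<longleftrightarrow> idealR A f = idealR A g"

definition greenH :: "'a set \<Rightarrow> ('a \<Rightarrow> 'a) \<Rightarrow> ('a \<Rightarrow> 'a) \<Rightarrow> bool" where
  "greenH A f g \<longleftrightarrow> greenL A f g \<and> greenR A f g"

definition greenD :: "'a set \<Rightarrow> ('a \<Rightarrow> 'a) \<Rightarrow> ('a \<Rightarrow> 'a) \<Rightarrow> bool" where
  "greenD A f g \<longleftrightarrow> (\<exists>h \<in> TXA A. greenL A f h \<and> greenR A h g)"

definition greenJ :: "'a set \<Rightarrow> ('a \<Rightarrow> 'a) \<Rightarrow> ('a \<Rightarrow> 'a) \<Rightarrow> bool" where
  "greenJ A f g \<longleftrightarrow> idealJ A f = idealJ A g"

end

theory Submission imports Defs begin

lemma TXA_iff: "f \<in> TXA A \<longleftrightarrow> (\<forall>x. f x \<in> A)" by (auto simp: TXA_def)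
lemma kernel_iff: "(x,y) \<in> kernel f \<longleftrightarrow> f x = f y" by (simp add: kernel_def)

lemma sat_iff: "saturates A (kernel f) \<longleftrightarrow> range f \<subseteq> f ` A"
proof -
  have q: "UNIV // kernel f = {{y. f x = f y} | x. True}"
    by (auto simp: quotient_def kernel_def Image_def)
  show ?thesis unfolding saturates_def q by (auto simp: image_def)
qed

lemma img_pre: assumes "S \<subseteq> f ` A" "y \<in> S" shows "\<exists>a. a \<in> A \<and> f a = y"
proof -
  have "y \<in> f ` A" using assms by (rule subsetD)
  then obtain a where "y = f a" "a \<in> A" by (rule imageE)
  thus ?thesis by auto
qed

lemma idealL_eq: fixes f :: "'a \<Rightarrow> 'a" shows "idealL A f = insert f {k. range k \<subseteq> f ` A}"
proof -
  have "{tmult h f | h. h \<in> TXA A} = {k. range k \<subseteq> f ` A}"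
  proof
    show "{tmult h f | h. h \<in> TXA A} \<subseteq> {k. range k \<subseteq> f ` A}"
      by (auto simp: tmult_def TXA_def)
  next
    show "{k. range k \<subseteq> f ` A} \<subseteq> {tmult h f | h. h \<in> TXA A}"
    proof
      fix k :: "'a \<Rightarrow> 'a" assume "k \<in> {k. range k \<subseteq> f ` A}"
      hence k: "range k \<subseteq> f ` A" by simp
      define h where "h = (\<lambda>x. SOME a. a \<in> A \<and> f a = k x)"
      have hx: "h x \<in> A \<and> f (h x) = k x" for x
      proof -
        from img_pre[OF k rangeI] obtain a where "a \<in> A" "f a = k x" by blast
        then show ?thesis unfolding h_def by (intro someI[of "\<lambda>a. a \<in> A \<and> f a = k x" a]) simp
      qed
      have "h \<in> TXA A" using hx by (simp add: TXA_iff)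
      moreover have "tmult h f = k" using hx by (simp add: tmult_def)
      ultimately show "k \<in> {tmult h f | h. h \<in> TXA A}" by blast
    qed
  qed
  thus ?thesis by (simp add: idealL_def)
qed

definition NN :: "'a set \<Rightarrow> ('a \<Rightarrow> 'a) \<Rightarrow> ('a \<Rightarrow> 'a) set" where
  "NN A f = {k. range k \<subseteq> A \<and> kernel f \<subseteq> kernel k}"
definition PP :: "'a set \<Rightarrow> ('a \<Rightarrow> 'a) \<Rightarrow> ('a \<Rightarrow> 'a) set" where
  "PP A f = {k. range k \<subseteq> A \<and> range k \<lesssim> f ` A}"

lemma factor_kernel:
  assumes "kernel f \<subseteq> kernel k" "a0 \<in> A" "range k \<subseteq> A"
  shows "\<exists>h \<in> TXA A. tmult f h = k"
proof -
  define h where "h = (\<lambda>y. if y \<in> range f then k (SOME x. f x = y) else a0)"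
  have "h \<in> TXA A" using assms by (auto simp: TXA_iff h_def)
  moreover have "tmult f h = k"
  proof
    fix x
    let ?x = "SOME x'. f x' = f x"
    have "f ?x = f x" by (rule someI) (rule refl)
    hence "k ?x = k x" using assms(1) by (auto simp: kernel_def)
    thus "tmult f h x = k x" by (simp add: tmult_def h_def)
  qed
  ultimately show ?thesis by blast
qed

lemma idealR_eq: assumes "f \<in> TXA A" "A \<noteq> {}" shows "idealR A f = NN A f"
proof -
  obtain a0 where a0: "a0 \<in> A" using assms by blast
  have "{tmult f h | h. h \<in> TXA A} = NN A f"
  proof
    show "{tmult f h | h. h \<in> TXA A} \<subseteq> NN A f"
    proof
      fix k assume "k \<in> {tmult f h | h. h \<in> TXA A}"
      then obtain h where h: "h \<in> TXA A" "k = tmult f h" by blast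
      have "range k \<subseteq> A" using h by (auto simp: TXA_def tmult_def)
      moreover have "kernel f \<subseteq> kernel k" using h by (auto simp: kernel_def tmult_def)
      ultimately show "k \<in> NN A f" by (simp add: NN_def)
    qed
  next
    show "NN A f \<subseteq> {tmult f h | h. h \<in> TXA A}"
    proof
      fix k assume "k \<in> NN A f"
      hence k: "kernel f \<subseteq> kernel k" "range k \<subseteq> A" by (simp_all add: NN_def)
      obtain h where "h \<in> TXA A" "tmult f h = k" using factor_kernel[OF k(1) a0 k(2)] by blast
      thus "k \<in> {tmult f h | h. h \<in> TXA A}" by blast
    qed
  qed
  moreover have "f \<in> NN A f" using assms by (auto simp: NN_def TXA_def)
  ultimately show ?thesis by (auto simp: idealR_def)
qed

lemma idealJ_eq: assumes "f \<in> TXA A" "A \<noteq> {}" shows "idealJ A f = NN A f \<union> PP A f"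
proof -
  obtain a0 where a0: "a0 \<in> A" using assms by blast
  have fA: "f ` A \<subseteq> A" using assms by (auto simp: TXA_def)
  have L: "idealL A f \<subseteq> NN A f \<union> PP A f"
  proof
    fix k assume "k \<in> idealL A f"
    hence "k = f \<or> range k \<subseteq> f ` A" by (simp add: idealL_eq)
    thus "k \<in> NN A f \<union> PP A f"
    proof
      assume "k = f" thus ?thesis using assms by (auto simp: NN_def TXA_def)
    next
      assume "range k \<subseteq> f ` A"
      thus ?thesis using fA subset_imp_lepoll[of "range k" "f ` A"] by (auto simp: PP_def)
    qed
  qed
  have M: "{tmult (tmult h f) k | h k. h \<in> TXA A \<and> k \<in> TXA A} = PP A f"
  proof
    show "{tmult (tmult h f) k | h k. h \<in> TXA A \<and> k \<in> TXA A} \<subseteq> PP A f"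
    proof
      fix m assume "m \<in> {tmult (tmult h f) k | h k. h \<in> TXA A \<and> k \<in> TXA A}"
      then obtain h k where hk: "h \<in> TXA A" "k \<in> TXA A" "m = tmult (tmult h f) k" by blast
      have "range m \<subseteq> A" using hk by (auto simp: tmult_def TXA_def)
      moreover have "range m \<subseteq> k ` (f ` A)" using hk by (auto simp: tmult_def TXA_def)
      hence "range m \<lesssim> f ` A" by (rule subset_image_lepoll)
      ultimately show "m \<in> PP A f" by (simp add: PP_def)
    qed
  next
    show "PP A f \<subseteq> {tmult (tmult h f) k | h k. h \<in> TXA A \<and> k \<in> TXA A}"
    proof
      fix m assume "m \<in> PP A f"
      hence m: "range m \<subseteq> A" "range m \<lesssim> f ` A" by (auto simp: PP_def)
      then obtain \<iota> where \<iota>: "inj_on \<iota> (range m)" "\<iota> ` range m \<subseteq> f ` A"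
        unfolding lepoll_def by blast
      define h where "h = (\<lambda>x. SOME a. a \<in> A \<and> f a = \<iota> (m x))"
      have hx: "h x \<in> A \<and> f (h x) = \<iota> (m x)" for x
      proof -
        from img_pre[OF \<iota>(2) imageI[OF rangeI]] obtain a where "a \<in> A" "f a = \<iota> (m x)" by blast
        then show ?thesis unfolding h_def by (intro someI[of "\<lambda>a. a \<in> A \<and> f a = \<iota> (m x)" a]) simp
      qed
      define \<psi> where "\<psi> = (\<lambda>y. if y \<in> \<iota> ` range m then inv_into (range m) \<iota> y else a0)"
      have "\<psi> \<in> TXA A" using m(1) a0
        by (auto simp: TXA_iff \<psi>_def inv_into_into)
      moreover have "h \<in> TXA A" using hx by (simp add: TXA_iff)
      moreover have "tmult (tmult h f) \<psi> = m"
      proof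
        fix x
        have "tmult (tmult h f) \<psi> x = \<psi> (\<iota> (m x))" using hx by (simp add: tmult_def)
        also have "\<dots> = m x" using \<iota>(1) by (simp add: \<psi>_def)
        finally show "tmult (tmult h f) \<psi> x = m x" .
      qed
      ultimately show "m \<in> {tmult (tmult h f) k | h k. h \<in> TXA A \<and> k \<in> TXA A}" by blast
    qed
  qed
  have R: "idealR A f = NN A f" by (rule idealR_eq[OF assms])
  show ?thesis unfolding idealJ_def M R using L by blast
qed


lemma kernel_lepoll:
  assumes "kernel f \<subseteq> kernel g" shows "g ` B \<lesssim> f ` B"
proof (rule subset_image_lepoll)
  let ?\<phi> = "\<lambda>y. g (SOME x. x \<in> B \<and> f x = y)"
  show "g ` B \<subseteq> ?\<phi> ` (f ` B)"
  proof
    fix z assume "z \<in> g ` B"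
    then obtain b where b: "b \<in> B" "z = g b" by blast
    let ?x = "SOME x. x \<in> B \<and> f x = f b"
    have "?x \<in> B \<and> f ?x = f b" using someI[of "\<lambda>x. x \<in> B \<and> f x = f b" b] b by blast
    hence "g ?x = g b" using assms by (auto simp: kernel_def)
    thus "z \<in> ?\<phi> ` (f ` B)" using b by force
  qed
qed

lemma kernel_eqpoll:
  assumes "kernel f = kernel g" shows "f ` B \<approx> g ` B"
  using assms by (simp add: kernel_lepoll lepoll_antisym)

lemma sat_kernel_cong: "kernel f = kernel g \<Longrightarrow> saturates A (kernel f) = saturates A (kernel g)"
  by simp

lemma L_char:
  assumes "f \<in> TXA A" "g \<in> TXA A"
  shows "greenL A f g \<longleftrightarrow>
            f = g \<or> (range f = range g \<and> saturates A (kernel f) \<and> saturates A (kernel g))"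
proof -
  have fa: "f ` A \<subseteq> range f" "g ` A \<subseteq> range g" by auto
  show ?thesis
    unfolding greenL_def idealL_eq sat_iff
  proof
    assume E: "insert f {k. range k \<subseteq> f ` A} = insert g {k. range k \<subseteq> g ` A}"
    show "f = g \<or> range f = range g \<and> range f \<subseteq> f ` A \<and> range g \<subseteq> g ` A"
    proof (cases "f = g")
      case False
      have "g \<in> insert f {k. range k \<subseteq> f ` A}" using E by (simp only: insertI1)
      hence g1: "range g \<subseteq> f ` A" using False by simp
      have "f \<in> insert g {k. range k \<subseteq> g ` A}" using E[symmetric] by (simp only: insertI1)
      hence f1: "range f \<subseteq> g ` A" using False by simp
      have "range f = range g" using f1 g1 fa by (meson order_trans subset_antisym)
      thus ?thesis using f1 g1 fa by simp
    qed simp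
  next
    assume "f = g \<or> range f = range g \<and> range f \<subseteq> f ` A \<and> range g \<subseteq> g ` A"
    thus "insert f {k. range k \<subseteq> f ` A} = insert g {k. range k \<subseteq> g ` A}"
    proof
      assume H: "range f = range g \<and> range f \<subseteq> f ` A \<and> range g \<subseteq> g ` A"
      hence "f ` A = range f" "g ` A = range g" using fa by (auto intro: subset_antisym)
      hence e: "f ` A = range f" "g ` A = range f" using H by simp_all
      have "f \<in> {k. range k \<subseteq> range f}" "g \<in> {k. range k \<subseteq> range f}" using H by auto
      thus ?thesis unfolding e by (simp add: insert_absorb)
    qed simp
  qed
qed

lemma R_char:
  assumes "A \<noteq> {}" "f \<in> TXA A" "g \<in> TXA A"
  shows "greenR A f g \<longleftrightarrow> kernel f = kernel g"
proof -
  have "f \<in> NN A f" "g \<in> NN A g" using assms by (auto simp: NN_def TXA_def)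
  thus ?thesis unfolding greenR_def idealR_eq[OF assms(2,1)] idealR_eq[OF assms(3,1)]
    by (auto simp: NN_def)
qed

lemma D_char:
  assumes A: "A \<noteq> {}" and f: "f \<in> TXA A" and g: "g \<in> TXA A"
  shows "greenD A f g \<longleftrightarrow>
            kernel f = kernel g \<or> (range f \<approx> range g \<and> saturates A (kernel f) \<and> saturates A (kernel g))"
proof
  assume "greenD A f g"
  then obtain h where h: "h \<in> TXA A" "greenL A f h" "greenR A h g" by (auto simp: greenD_def)
  have kh: "kernel h = kernel g" using h R_char[OF A h(1) g] by simp
  from h(2) L_char[OF f h(1)] have "f = h \<or> (range f = range h \<and> saturates A (kernel f) \<and> saturates A (kernel h))"
    by simp
  thus "kernel f = kernel g \<or> (range f \<approx> range g \<and> saturates A (kernel f) \<and> saturates A (kernel g))"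
  proof
    assume "f = h" thus ?thesis using kh by simp
  next
    assume H: "range f = range h \<and> saturates A (kernel f) \<and> saturates A (kernel h)"
    have "range h \<approx> range g" using kernel_eqpoll[OF kh] .
    thus ?thesis using H kh by simp
  qed
next
  assume "kernel f = kernel g \<or> (range f \<approx> range g \<and> saturates A (kernel f) \<and> saturates A (kernel g))"
  thus "greenD A f g"
  proof
    assume "kernel f = kernel g"
    thus ?thesis using f L_char[OF f f] R_char[OF A f g] unfolding greenD_def by blast
  next
    assume H: "range f \<approx> range g \<and> saturates A (kernel f) \<and> saturates A (kernel g)"
    then obtain \<phi> where \<phi>: "bij_betw \<phi> (range g) (range f)"
      unfolding eqpoll_def using eqpoll_sym[unfolded eqpoll_def] by blast
    define h where "h = \<phi> \<circ> g"
    have "range h = \<phi> ` range g" unfolding h_def by (simp add: image_comp)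
    hence rh: "range h = range f" using bij_betw_imp_surj_on[OF \<phi>] by simp
    have h: "h \<in> TXA A" using rh f by (simp add: TXA_def)
    have kh: "kernel h = kernel g" using \<phi> unfolding h_def bij_betw_def kernel_def
      by (auto simp: inj_on_eq_iff)
    have "greenL A f h" using L_char[OF f h] rh H kh by simp
    moreover have "greenR A h g" using R_char[OF A h g] kh by simp
    ultimately show ?thesis using h unfolding greenD_def by blast
  qed
qed


lemma range_lepoll_image:
  assumes "kernel g \<subseteq> kernel f \<or> range f \<lesssim> g ` A"
  shows "range f \<lesssim> range g"
  using assms
proof
  assume "kernel g \<subseteq> kernel f" thus ?thesis by (rule kernel_lepoll)
next
  assume "range f \<lesssim> g ` A"
  moreover have "g ` A \<lesssim> range g" by (rule subset_imp_lepoll) auto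
  ultimately show ?thesis by (rule lepoll_trans)
qed

lemma J_forward_half:
  assumes A: "A \<noteq> {}" and f: "f \<in> TXA A" and g: "g \<in> TXA A"
    and E: "NN A f \<union> PP A f = NN A g \<union> PP A g" and K: "kernel f \<noteq> kernel g"
  shows "range f \<approx> range g \<and> f ` A \<approx> range f"
proof -
  have fN: "f \<in> NN A f" using f by (auto simp: NN_def TXA_def)
  have gN: "g \<in> NN A g" using g by (auto simp: NN_def TXA_def)
  have fsub: "f ` A \<lesssim> range f" "g ` A \<lesssim> range g" by (rule subset_imp_lepoll, auto)+
  have "f \<in> NN A g \<union> PP A g" using fN E by blast
  hence "range f \<lesssim> range g" by (intro range_lepoll_image) (auto simp: NN_def PP_def)
  moreover have "g \<in> NN A f \<union> PP A f" using gN E by blast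
  hence "range g \<lesssim> range f" by (intro range_lepoll_image) (auto simp: NN_def PP_def)
  ultimately have rr: "range f \<approx> range g" by (rule lepoll_antisym)
  have "f ` A \<approx> range f"
  proof (rule ccontr)
    assume nf: "\<not> f ` A \<approx> range f"
    hence nf': "\<not> range f \<lesssim> f ` A" using fsub(1) lepoll_antisym by blast
    show False
    proof (cases "g ` A \<approx> range g")
      case True
      have "\<not> inj f"
      proof
        assume "inj f"
        hence e: "f ` range f \<approx> range f" by (simp add: inj_on_image_eqpoll_self inj_on_subset)
        have "range f \<subseteq> A" using f by (simp add: TXA_def)
        hence s: "f ` range f \<subseteq> f ` A" by (rule image_mono)
        have "range f \<lesssim> f ` A"
          by (rule lepoll_trans1[OF eqpoll_sym[OF e] subset_imp_lepoll[OF s]])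
        thus False using nf' by simp
      qed
      then obtain x y where xy: "x \<noteq> y" "f x = f y" unfolding inj_def by blast
      obtain a where a: "a \<in> A" using A by blast
      obtain z where z: "z \<in> range f" "z \<noteq> f x"
      proof (rule ccontr)
        assume "\<not> thesis"
        hence "\<forall>z \<in> range f. z = f x" using that by blast
        hence all: "\<And>w. w \<in> range f \<Longrightarrow> w = f x" by blast
        have "range f \<subseteq> f ` A"
        proof
          fix w assume "w \<in> range f"
          hence "w = f a" using all[of w] all[of "f a"] by simp
          thus "w \<in> f ` A" using a by simp
        qed
        thus False using nf' subset_imp_lepoll by blast
      qed
      define k where "k = f(x := z)"
      have rk: "range k = range f"
      proof
        show "range k \<subseteq> range f" using z by (auto simp: k_def)
      next
        show "range f \<subseteq> range k"
        proof
          fix w assume "w \<in> range f"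
          then obtain u where u: "w = f u" by blast
          show "w \<in> range k"
          proof (cases "u = x")
            case True
            hence "w = k y" using xy u by (simp add: k_def)
            thus ?thesis by simp
          next
            case False
            hence "w = k u" using u by (simp add: k_def)
            thus ?thesis by simp
          qed
        qed
      qed
      have kA: "range k \<subseteq> A" using rk f by (simp add: TXA_def)
      have "range k \<lesssim> g ` A" using rk rr True
        by (metis eqpoll_imp_lepoll eqpoll_sym eqpoll_trans)
      hence "k \<in> PP A g" using kA by (simp add: PP_def)
      hence "k \<in> NN A f \<union> PP A f" using E by blast
      moreover have "k \<notin> NN A f"
      proof
        assume "k \<in> NN A f"
        hence "(x, y) \<in> kernel k" using xy by (auto simp: NN_def kernel_def)
        thus False using xy z by (simp add: kernel_def k_def)
      qed
      moreover have "k \<notin> PP A f" using rk nf' by (simp add: PP_def)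
      ultimately show False by blast
    next
      case False
      hence ng': "\<not> range g \<lesssim> g ` A" using fsub(2) lepoll_antisym by blast
      have "f \<in> NN A g \<union> PP A g" using fN E by blast
      moreover have "f \<notin> PP A g"
      proof
        assume "f \<in> PP A g"
        hence "range f \<lesssim> g ` A" by (simp add: PP_def)
        hence "range g \<lesssim> g ` A" using rr eqpoll_sym lepoll_trans1 by blast
        thus False using ng' by simp
      qed
      ultimately have k1: "kernel g \<subseteq> kernel f" by (simp add: NN_def)
      have "g \<in> NN A f \<union> PP A f" using gN E by blast
      moreover have "g \<notin> PP A f"
      proof
        assume "g \<in> PP A f"
        hence "range g \<lesssim> f ` A" by (simp add: PP_def)
        hence "range f \<lesssim> f ` A" using rr lepoll_trans1 by blast
        thus False using nf' by simp
      qed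
      ultimately have k2: "kernel f \<subseteq> kernel g" by (simp add: NN_def)
      show False using k1 k2 K by blast
    qed
  qed
  thus ?thesis using rr by simp
qed

lemma J_char:
  assumes A: "A \<noteq> {}" and f: "f \<in> TXA A" and g: "g \<in> TXA A"
  shows "greenJ A f g \<longleftrightarrow>
            kernel f = kernel g \<or> (f ` A \<approx> range f \<and> range f \<approx> range g \<and> range g \<approx> g ` A)"
  unfolding greenJ_def idealJ_eq[OF f A] idealJ_eq[OF g A]
proof
  assume E: "NN A f \<union> PP A f = NN A g \<union> PP A g"
  show "kernel f = kernel g \<or> (f ` A \<approx> range f \<and> range f \<approx> range g \<and> range g \<approx> g ` A)"
  proof (cases "kernel f = kernel g")
    case False
    have 1: "range f \<approx> range g \<and> f ` A \<approx> range f" by (rule J_forward_half[OF A f g E False])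
    have 2: "range g \<approx> range f \<and> g ` A \<approx> range g"
      by (rule J_forward_half[OF A g f E[symmetric]]) (use False in auto)
    show ?thesis using 1 2 eqpoll_sym by blast
  qed simp
next
  assume "kernel f = kernel g \<or> (f ` A \<approx> range f \<and> range f \<approx> range g \<and> range g \<approx> g ` A)"
  thus "NN A f \<union> PP A f = NN A g \<union> PP A g"
  proof
    assume K: "kernel f = kernel g"
    have "f ` A \<approx> g ` A" by (rule kernel_eqpoll[OF K])
    hence "PP A f = PP A g" unfolding PP_def
      by (metis eqpoll_imp_lepoll eqpoll_sym lepoll_trans)
    moreover have "NN A f = NN A g" using K by (simp add: NN_def)
    ultimately show ?thesis by simp
  next
    assume H: "f ` A \<approx> range f \<and> range f \<approx> range g \<and> range g \<approx> g ` A"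
    have "NN A f \<subseteq> PP A f"
    proof
      fix k assume "k \<in> NN A f"
      hence "range k \<subseteq> A" "range k \<lesssim> range f" using kernel_lepoll[of f k UNIV] by (auto simp: NN_def)
      moreover have "range f \<approx> f ` A" using H eqpoll_sym by blast
      ultimately show "k \<in> PP A f" using lepoll_trans2 by (simp add: PP_def)
    qed
    moreover have "NN A g \<subseteq> PP A g"
    proof
      fix k assume "k \<in> NN A g"
      hence "range k \<subseteq> A" "range k \<lesssim> range g" using kernel_lepoll[of g k UNIV] by (auto simp: NN_def)
      moreover have "range g \<approx> g ` A" using H by blast
      ultimately show "k \<in> PP A g" using lepoll_trans2 by (simp add: PP_def)
    qed
    moreover have "f ` A \<approx> g ` A" using H eqpoll_trans by blast
    hence "PP A f = PP A g" unfolding PP_def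
      by (metis eqpoll_imp_lepoll eqpoll_sym lepoll_trans)
    ultimately show ?thesis by blast
  qed
qed



lemma sat_eqpoll:
  assumes "finite A \<or> A = UNIV" "h \<in> TXA A"
  shows "saturates A (kernel h) \<longleftrightarrow> h ` A \<approx> range h"
proof
  assume "saturates A (kernel h)"
  hence "h ` A = range h" unfolding sat_iff by auto
  thus "h ` A \<approx> range h" by simp
next
  assume E: "h ` A \<approx> range h"
  show "saturates A (kernel h)" unfolding sat_iff
  using assms(1)
  proof
    assume fin: "finite A"
    have rA: "range h \<subseteq> A" using assms(2) by (simp add: TXA_def)
    hence fr: "finite (range h)" using fin finite_subset by blast
    have fa: "finite (h ` A)" using fin by simp
    have "card (h ` A) = card (range h)" using E fr fa eqpoll_iff_card by blast
    moreover have "h ` A \<subseteq> range h" by (rule image_mono) simp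
    ultimately have "h ` A = range h" using fr card_subset_eq by metis
    thus "range h \<subseteq> h ` A" by simp
  qed simp
qed

lemma DJ_char:
  assumes A: "A \<noteq> {}"
  shows "(\<forall>f' \<in> TXA A. \<forall>g' \<in> TXA A. greenD A f' g' \<longleftrightarrow> greenJ A f' g')
            \<longleftrightarrow> finite A \<or> A = UNIV"
proof
  assume C: "finite A \<or> A = UNIV"
  show "\<forall>f' \<in> TXA A. \<forall>g' \<in> TXA A. greenD A f' g' \<longleftrightarrow> greenJ A f' g'"
  proof (intro ballI)
    fix f g assume f: "f \<in> TXA A" and g: "g \<in> TXA A"
    have s1: "saturates A (kernel f) \<longleftrightarrow> f ` A \<approx> range f" by (rule sat_eqpoll[OF C f])
    have s2: "saturates A (kernel g) \<longleftrightarrow> range g \<approx> g ` A"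
      using sat_eqpoll[OF C g] eqpoll_sym by blast
    show "greenD A f g \<longleftrightarrow> greenJ A f g"
      unfolding D_char[OF A f g] J_char[OF A f g] s1 s2 by blast
  qed
next
  assume all: "\<forall>f' \<in> TXA A. \<forall>g' \<in> TXA A. greenD A f' g' \<longleftrightarrow> greenJ A f' g'"
  show "finite A \<or> A = UNIV"
  proof (rule ccontr)
    assume "\<not> (finite A \<or> A = UNIV)"
    hence inf: "infinite A" and "A \<noteq> UNIV" by auto
    then obtain b where b: "b \<notin> A" by blast
    obtain a0 where a0: "a0 \<in> A" using A by blast
    have inf': "infinite (A - {a0})" using inf by simp
    have "insert a0 (A - {a0}) \<approx> A - {a0}" by (rule infinite_insert_eqpoll[OF inf'])
    hence "A \<approx> A - {a0}" using a0 by (simp add: insert_absorb)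
    then obtain \<sigma> where \<sigma>: "bij_betw \<sigma> A (A - {a0})" unfolding eqpoll_def by blast
    define f where "f = (\<lambda>x. if x \<in> A then \<sigma> x else a0)"
    define g where "g = (\<lambda>x. if x \<in> A then x else a0)"
    have fA: "f ` A = A - {a0}" using \<sigma> by (simp add: f_def bij_betw_def)
    have rf: "range f = A"
    proof
      show "range f \<subseteq> A" using \<sigma> a0 by (auto simp: f_def bij_betw_def)
    next
      have "a0 = f b" using b by (simp add: f_def)
      hence "a0 \<in> range f" by simp
      moreover have "A - {a0} \<subseteq> range f" using fA by auto
      ultimately show "A \<subseteq> range f" by blast
    qed
    have gA: "g ` A = A" by (auto simp: g_def)
    have rg: "range g = A" using a0 by (auto simp: g_def)
    have f: "f \<in> TXA A" using rf by (simp add: TXA_def)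
    have g: "g \<in> TXA A" using rg by (simp add: TXA_def)
    have "f a0 \<noteq> a0" using \<sigma> a0 by (auto simp: f_def bij_betw_def)
    hence K: "kernel f \<noteq> kernel g" using a0 b
      by (auto simp: kernel_def f_def g_def fun_eq_iff set_eq_iff split: if_splits)
    have "greenJ A f g" unfolding J_char[OF A f g] using fA rf rg gA
      by (metis eqpoll_refl eqpoll_sym \<open>A \<approx> A - {a0}\<close>)
    moreover have "\<not> saturates A (kernel f)" unfolding sat_iff using fA rf a0 by blast
    hence "\<not> greenD A f g" unfolding D_char[OF A f g] using K by blast
    ultimately show False using all f g by blast
  qed
qed

theorem theorem5p4:
  fixes A :: "'a set" and f g :: "'a \<Rightarrow> 'a"
  assumes "A \<noteq> {}" and "f \<in> TXA A" and "g \<in> TXA A"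
  shows "(greenL A f g \<longleftrightarrow>
            f = g \<or> (range f = range g \<and> saturates A (kernel f) \<and> saturates A (kernel g)))
       \<and> (greenR A f g \<longleftrightarrow> kernel f = kernel g)
       \<and> (greenH A f g \<longleftrightarrow>
            f = g \<or> (range f = range g \<and> kernel f = kernel g \<and> saturates A (kernel f)))
       \<and> (greenD A f g \<longleftrightarrow>
            kernel f = kernel g \<or> (range f \<approx> range g \<and> saturates A (kernel f) \<and> saturates A (kernel g)))
       \<and> (greenJ A f g \<longleftrightarrow>
            kernel f = kernel g \<or> (f ` A \<approx> range f \<and> range f \<approx> range g \<and> range g \<approx> g ` A))
       \<and> ((\<forall>f' \<in> TXA A. \<forall>g' \<in> TXA A. greenD A f' g' \<longleftrightarrow> greenJ A f' g')
            \<longleftrightarrow> finite A \<or> A = UNIV)"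
proof -
  have H: "greenH A f g \<longleftrightarrow>
            f = g \<or> (range f = range g \<and> kernel f = kernel g \<and> saturates A (kernel f))"
    unfolding greenH_def L_char[OF assms(2,3)] R_char[OF assms] by auto
  show ?thesis
    apply (intro conjI)
         apply (rule L_char[OF assms(2,3)])
        apply (rule R_char[OF assms])
       apply (rule H)
      apply (rule D_char[OF assms])
     apply (rule J_char[OF assms])
    apply (rule DJ_char[OF assms(1)])
    done
qed

end
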